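(* Let $L>0$ and let $\alpha,\beta:\mathbb{R}\to\mathbb{R}^2$ be smooth $L$-periodic maps (initial data) with $\alpha'$ nowhere zero, $\langle\beta,\alpha'\rangle = 0$ and $|\alpha'|^2+|\beta|^2=1$, and such that $\alpha$ has zero rotation index. Let $\gamma(t,s) = \tfrac12(\alpha(s+t)+\alpha(s-t)) + \tfrac12\int_{s-t}^{s+t}\beta(\xi)\,d\xi$. Then there exists a time $T$ such that the unit tangent map $U(T,\cdot)$ of the curve $s\mapsto\gamma(T,s)$ is discontinuous, i.e. $s\mapsto \gamma_{,s}(T,s)/|\gamma_{,s}(T,s)|$ (defined where $\gamma_{,s}(T,s)\neq0$) does not extend to a continuous map on $\mathbb{R}$.
   Context: The rotation index of $\alpha$ is the degree of $\alpha'/|\alpha'|$ as a map from $\mathbb{R}/L\mathbb{Z}$ to the unit circle. *)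

theory Defs
  imports "HOL-Analysis.Analysis"
begin

text \<open>The plane R^2 is identified with the complex numbers (real inner product = inner on complex).\<close>

definition vderiv :: "(real \<Rightarrow> complex) \<Rightarrow> real \<Rightarrow> complex" where
  "vderiv f = (\<lambda>t. vector_derivative f (at t))"

definition smooth :: "(real \<Rightarrow> complex) \<Rightarrow> bool" where
  "smooth f \<longleftrightarrow> (\<forall>n t. (vderiv ^^ n) f differentiable (at t))"

definition periodic :: "real \<Rightarrow> (real \<Rightarrow> 'a) \<Rightarrow> bool" where
  "periodic L f \<longleftrightarrow> (\<forall>s. f (s + L) = f s)"

definition is_lift :: "(real \<Rightarrow> complex) \<Rightarrow> (real \<Rightarrow> real) \<Rightarrow> bool" where
  "is_lift U \<theta> \<longleftrightarrow> continuous_on UNIV \<theta> \<and> (\<forall>s. U s = cis (\<theta> s))"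

definition circle_degree :: "real \<Rightarrow> (real \<Rightarrow> complex) \<Rightarrow> int" where
  "circle_degree L U = (THE d::int. \<forall>\<theta>. is_lift U \<theta> \<longrightarrow> \<theta> L - \<theta> 0 = 2 * pi * of_int d)"

definition rotation_index :: "real \<Rightarrow> (real \<Rightarrow> complex) \<Rightarrow> int" where
  "rotation_index L \<alpha> = circle_degree L (\<lambda>s. vderiv \<alpha> s / of_real (norm (vderiv \<alpha> s)))"

definition gamma_sol :: "(real \<Rightarrow> complex) \<Rightarrow> (real \<Rightarrow> complex) \<Rightarrow> real \<Rightarrow> real \<Rightarrow> complex" where
  "gamma_sol \<alpha> \<beta> t s = (\<alpha> (s + t) + \<alpha> (s - t)) / 2 + integral {s - t..s + t} \<beta> / 2"

end

theory Submission
  imports Defs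
begin


lemma range_ivt:
  fixes f :: "real \<Rightarrow> real"
  assumes "continuous_on UNIV f" "f a \<le> y" "y \<le> f b"
  shows "\<exists>x. f x = y"
proof (cases "a \<le> b")
  case True
  have "continuous_on {a..b} f" using assms(1) continuous_on_subset by blast
  from IVT'[OF assms(2) assms(3) True this] show ?thesis by blast
next
  case False
  have "continuous_on {b..a} f" using assms(1) continuous_on_subset by blast
  from IVT2'[of f a y b, OF assms(2) assms(3) _ this] False show ?thesis by force
qed

lemma periodic_int:
  fixes f :: "real \<Rightarrow> 'a"
  assumes "\<forall>s. f (s + L) = f s"
  shows "f (x + of_int k * L) = f x"
proof (induction k arbitrary: x rule: int_induct[where k=0])
  case base then show ?case by simp
next
  case (step1 i) 
  have "f (x + of_int (i+1) * L) = f ((x + of_int i * L) + L)" by (simp add: algebra_simps)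
  also have "\<dots> = f x" using assms step1 by simp
  finally show ?case .
next
  case (step2 i)
  have "f (x + of_int (i-1) * L) = f ((x - L) + of_int i * L)" by (simp add: algebra_simps)
  also have "\<dots> = f (x - L)" using step2 by blast
  also have "\<dots> = f x" using assms[rule_format, of "x - L"] by simp
  finally show ?case .
qed
lemma periodic_min:
  fixes f :: "real \<Rightarrow> real"
  assumes "continuous_on UNIV f" "\<forall>s. f (s + L) = f s" "L > 0"
  shows "\<exists>a. \<forall>x. f a \<le> f x"
proof -
  obtain a where a: "a \<in> {0..L}" "\<forall>x\<in>{0..L}. f a \<le> f x"
  proof -
    have "continuous_on {0..L} f" using assms(1) continuous_on_subset by blast
    moreover have "{0..L} \<noteq> {}" using assms(3) by simp
    ultimately show ?thesis using continuous_attains_inf[of "{0..L}" f] that by (meson compact_Icc)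
  qed
  have "f a \<le> f x" for x
  proof -
    define k where "k = floor (x / L)"
    have k1: "of_int k \<le> x / L" "x / L < of_int k + 1" unfolding k_def using floor_correct[of "x/L"] by auto
    have "of_int k * L \<le> x" using k1(1) assms(3) by (simp add: le_divide_eq)
    moreover have "x < of_int k * L + L" using k1(2) assms(3) by (simp add: divide_less_eq algebra_simps)
    ultimately have "x - of_int k * L \<in> {0..L}" by auto
    hence "f a \<le> f (x - of_int k * L)" using a by auto
    also have "\<dots> = f x" using periodic_int[OF assms(2), of "x - of_int k * L" k] by simp
    finally show ?thesis .
  qed
  then show ?thesis by blast
qed

lemma periodic_max:
  fixes f :: "real \<Rightarrow> real"
  assumes "continuous_on UNIV f" "\<forall>s. f (s + L) = f s" "L > 0"
  shows "\<exists>a. \<forall>x. f x \<le> f a"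
proof -
  have "continuous_on UNIV (\<lambda>x. - f x)" using assms(1) by (intro continuous_intros)
  from periodic_min[OF this _ assms(3)] assms(2) show ?thesis by auto
qed

lemma clamp_lemma:
  fixes f f' :: "real \<Rightarrow> real"
  assumes der: "\<And>x. DERIV f x :> f' x" and "f x1 = lo" "f x2 = hi" "lo < hi"
  shows "\<exists>\<xi>. lo \<le> f \<xi> \<and> f \<xi> \<le> hi \<and> f' \<xi> \<noteq> 0"
proof (rule ccontr)
  assume H: "\<not> ?thesis"
  define g where "g t = max lo (min hi (f t))" for t
  have cont: "isCont f t" for t using der DERIV_isCont by blast
  have "DERIV g t :> 0" for t
  proof (cases "f t < lo")
    case True
    define S where "S = f -` {..<lo}"
    have S: "open S" "t \<in> S" "\<forall>s\<in>S. f s < lo" unfolding S_def using True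
      by (auto intro!: open_vimage continuous_at_imp_continuous_on cont)
    have "DERIV (\<lambda>_. lo) t :> 0" by simp
    then show ?thesis
      by (rule has_field_derivative_transform_within_open[OF _ S(1,2)]) (use S(3) \<open>lo < hi\<close> in \<open>auto simp: g_def\<close>)
  next
    case F1: False
    show ?thesis
    proof (cases "f t > hi")
      case True
      define S where "S = f -` {hi<..}"
      have S: "open S" "t \<in> S" "\<forall>s\<in>S. f s > hi" unfolding S_def using True
        by (auto intro!: open_vimage continuous_at_imp_continuous_on cont)
      have "DERIV (\<lambda>_. hi) t :> 0" by simp
      then show ?thesis
        by (rule has_field_derivative_transform_within_open[OF _ S(1,2)]) (use S(3) \<open>lo < hi\<close> in \<open>auto simp: g_def\<close>)
    next
      case False
      with F1 H have f0: "f' t = 0" by auto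
      with der[of t] have "((\<lambda>h. (f (t + h) - f t) / h) \<longlongrightarrow> 0) (at 0)" by (simp add: DERIV_def)
      hence lim: "((\<lambda>h. \<bar>(f (t + h) - f t) / h\<bar>) \<longlongrightarrow> 0) (at 0)" by (rule tendsto_rabs_zero)
      have "((\<lambda>h. (g (t + h) - g t) / h) \<longlongrightarrow> 0) (at 0)"
      proof (rule Lim_null_comparison[OF _ lim])
        show "\<forall>\<^sub>F h in at 0. norm ((g (t + h) - g t) / h) \<le> \<bar>(f (t + h) - f t) / h\<bar>"
        proof (rule always_eventually, rule allI)
          fix h
          have "\<bar>g (t + h) - g t\<bar> \<le> \<bar>f (t + h) - f t\<bar>" unfolding g_def by linarith
          then show "norm ((g (t + h) - g t) / h) \<le> \<bar>(f (t + h) - f t) / h\<bar>"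
            by (simp add: abs_divide divide_right_mono)
        qed
      qed
      then show ?thesis by (simp add: DERIV_def)
    qed
  qed
  hence "g x1 = g x2" using DERIV_isconst_all by blast
  then show False using assms by (simp add: g_def)
qed

lemma crossing:
  fixes f f' :: "real \<Rightarrow> real"
  assumes der: "\<And>x. DERIV f x :> f' x" and per: "\<forall>s. f (s + L) = f s" and L: "L > 0"
    and pos: "f' \<xi> > 0"
  shows "\<exists>x'. f x' = f \<xi> \<and> f' x' \<le> 0"
proof -
  define w where "w = f \<xi>"
  have cont: "continuous_on UNIV f"
    by (meson DERIV_isCont continuous_at_imp_continuous_on der)
  obtain d where d: "d > 0" "\<forall>h>0. h < d \<longrightarrow> f \<xi> < f (\<xi> + h)"
    using DERIV_pos_inc_right[OF der pos] by blast
  define a0 where "a0 = \<xi> + min (d/2) (L/2)"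
  define b0 where "b0 = \<xi> + L"
  have a0: "f a0 > w" unfolding a0_def w_def using d L by auto
  have b0: "f b0 = w" unfolding b0_def w_def using per by simp
  have ab: "a0 < b0" unfolding a0_def b0_def using L d by auto
  define S where "S = {t \<in> {a0..b0}. f t \<le> w}"
  have Sne: "S \<noteq> {}" using b0 ab unfolding S_def by auto
  have "closed {t. f t \<le> w}" using closed_Collect_le[OF cont continuous_on_const] .
  moreover have "S = {a0..b0} \<inter> {t. f t \<le> w}" unfolding S_def by auto
  ultimately have "closed S" by (simp add: closed_Int)
  moreover have "bdd_below S" unfolding S_def by (rule bdd_belowI[of _ a0]) auto
  ultimately have xS: "Inf S \<in> S" using Sne closed_contains_Inf by blast
  define x' where "x' = Inf S"
  have low: "t \<in> S \<Longrightarrow> x' \<le> t" for t unfolding x'_def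
    using \<open>bdd_below S\<close> by (simp add: cInf_lower)
  have x'1: "a0 \<le> x'" "x' \<le> b0" "f x' \<le> w" using xS unfolding S_def x'_def by auto
  have "x' \<noteq> a0" using a0 x'1 by auto
  hence x'2: "a0 < x'" using x'1 by auto
  have fx: "f x' = w"
  proof (rule ccontr)
    assume "f x' \<noteq> w"
    hence "f x' < w" using x'1 by auto
    have "continuous_on {a0..x'} f" using cont continuous_on_subset by blast
    from IVT2'[of f x' w a0, OF _ _ _ this] a0 \<open>f x' < w\<close> x'2
    obtain t where t: "a0 \<le> t" "t \<le> x'" "f t = w" by force
    hence "t \<in> S" using x'1 unfolding S_def by auto
    hence "x' \<le> t" by (rule low)
    hence "t = x'" using t by auto
    thus False using t \<open>f x' \<noteq> w\<close> by simp
  qed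
  have "f' x' \<le> 0"
  proof (rule ccontr)
    assume "\<not> f' x' \<le> 0"
    then obtain e where e: "e > 0" "\<forall>h>0. h < e \<longrightarrow> f (x' - h) < f x'"
      using DERIV_pos_inc_left[OF der, of x'] by force
    define h where "h = min (e/2) ((x' - a0)/2)"
    have h: "h > 0" "h < e" "h < x' - a0" unfolding h_def using e x'2 by (auto simp: min_def)
    have "f (x' - h) < w" using e h fx by auto
    hence "x' - h \<in> S" using h x'1 unfolding S_def by auto
    hence "x' \<le> x' - h" by (rule low)
    thus False using h by simp
  qed
  then show ?thesis using fx w_def by blast
qed
lemma deriv_shift_periodic:
  fixes f f' :: "real \<Rightarrow> real"
  assumes der: "\<And>x. DERIV f x :> f' x" and per: "\<forall>s. f (s + L) = f s"
  shows "f' (x + of_int k * L) = f' x"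
proof -
  have "(\<lambda>s. f (s + of_int k * L)) = f" using periodic_int[OF per] by auto
  hence "DERIV (\<lambda>s. f (s + of_int k * L)) x :> f' x" using der by simp
  hence "DERIV f (x + of_int k * L) :> f' x" using DERIV_shift by blast
  thus ?thesis using der DERIV_unique by blast
qed

lemma core:
  fixes \<phi> \<psi> \<phi>' \<psi>' :: "real \<Rightarrow> real" and c L :: real
  assumes d\<phi>: "\<And>x. DERIV \<phi> x :> \<phi>' x" and d\<psi>: "\<And>x. DERIV \<psi> x :> \<psi>' x"
    and p\<phi>: "\<forall>s. \<phi> (s + L) = \<phi> s" and p\<psi>: "\<forall>s. \<psi> (s + L) = \<psi> s" and L: "L > 0"
    and lo1: "\<phi> x1 - \<psi> y1 < c" and hi1: "\<phi> x2 - \<psi> y2 > c"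
    and nc\<phi>: "\<phi> p1 \<noteq> \<phi> p2" and nc\<psi>: "\<psi> q1 \<noteq> \<psi> q2"
  shows "\<exists>x y. y < x \<and> \<phi> x - \<psi> y = c \<and> \<phi>' x \<noteq> \<psi>' y"
proof -
  have c\<phi>: "continuous_on UNIV \<phi>"
    by (meson DERIV_isCont continuous_at_imp_continuous_on d\<phi>)
  have c\<psi>: "continuous_on UNIV \<psi>"
    by (meson DERIV_isCont continuous_at_imp_continuous_on d\<psi>)
  obtain a1 where a1: "\<forall>x. \<phi> a1 \<le> \<phi> x" using periodic_min[OF c\<phi> p\<phi> L] by blast
  obtain b1 where b1: "\<forall>x. \<phi> x \<le> \<phi> b1" using periodic_max[OF c\<phi> p\<phi> L] by blast
  obtain a2 where a2: "\<forall>x. \<psi> a2 \<le> \<psi> x" using periodic_min[OF c\<psi> p\<psi> L] by blast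
  obtain b2 where b2: "\<forall>x. \<psi> x \<le> \<psi> b2" using periodic_max[OF c\<psi> p\<psi> L] by blast
  have m1: "\<phi> a1 < \<phi> b1" using a1[rule_format, of p1] a1[rule_format, of p2] b1[rule_format, of p1] b1[rule_format, of p2] nc\<phi> by linarith
  have m2: "\<psi> a2 < \<psi> b2" using a2[rule_format, of q1] a2[rule_format, of q2] b2[rule_format, of q1] b2[rule_format, of q2] nc\<psi> by linarith
  define lo where "lo = max (\<phi> a1) (\<psi> a2 + c)"
  define hi where "hi = min (\<phi> b1) (\<psi> b2 + c)"
  have "\<phi> x1 \<ge> \<phi> a1" "\<psi> y1 \<le> \<psi> b2" "\<psi> y2 \<ge> \<psi> a2" "\<phi> x2 \<le> \<phi> b1" using a1 b1 a2 b2 by auto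
  hence lohi: "lo < hi" unfolding lo_def hi_def using m1 m2 lo1 hi1 by auto
  obtain xl where xl: "\<phi> xl = lo"
    using range_ivt[OF c\<phi>, of a1 lo b1] lo_def hi_def lohi by auto
  obtain xh where xh: "\<phi> xh = hi"
    using range_ivt[OF c\<phi>, of a1 hi b1] lo_def hi_def lohi by auto
  obtain \<xi> where \<xi>: "lo \<le> \<phi> \<xi>" "\<phi> \<xi> \<le> hi" "\<phi>' \<xi> \<noteq> 0"
    using clamp_lemma[OF d\<phi> xl xh lohi] by blast
  obtain y0 where y0: "\<psi> y0 = \<phi> \<xi> - c"
    using range_ivt[OF c\<psi>, of a2 "\<phi> \<xi> - c" b2] \<xi> lo_def hi_def by auto
  obtain x0 where x0: "\<phi> x0 = \<phi> \<xi>" "\<phi>' x0 \<noteq> \<psi>' y0"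
  proof (cases "\<phi>' \<xi> = \<psi>' y0")
    case False then show ?thesis using that by blast
  next
    case True
    show ?thesis
    proof (cases "\<phi>' \<xi> > 0")
      case True
      then obtain x' where "\<phi> x' = \<phi> \<xi>" "\<phi>' x' \<le> 0" using crossing[OF d\<phi> p\<phi> L] by blast
      then show ?thesis using that \<open>\<phi>' \<xi> = \<psi>' y0\<close> True by force
    next
      case False
      hence neg: "- \<phi>' \<xi> > 0" using \<xi>(3) by auto
      have d': "\<And>x. DERIV (\<lambda>x. - \<phi> x) x :> - \<phi>' x" using d\<phi> by (intro derivative_intros)
      have p': "\<forall>s. - \<phi> (s + L) = - \<phi> s" using p\<phi> by simp
      obtain x' where "- \<phi> x' = - \<phi> \<xi>" "- \<phi>' x' \<le> 0"
        using crossing[of "\<lambda>x. - \<phi> x" "\<lambda>x. - \<phi>' x", OF d' p' L neg] by blast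
      then show ?thesis using that \<open>\<phi>' \<xi> = \<psi>' y0\<close> neg by force
    qed
  qed
  define k :: int where "k = ceiling ((y0 - x0) / L) + 1"
  have "(y0 - x0) / L < of_int k" unfolding k_def by linarith
  hence "y0 - x0 < of_int k * L" using L by (simp add: divide_less_eq)
  hence "y0 < x0 + of_int k * L" by simp
  moreover have "\<phi> (x0 + of_int k * L) = \<phi> x0" using periodic_int[OF p\<phi>] .
  moreover have "\<phi>' (x0 + of_int k * L) = \<phi>' x0" using deriv_shift_periodic[OF d\<phi> p\<phi>] .
  ultimately show ?thesis using x0 y0 by (intro exI[of _ "x0 + of_int k * L"] exI[of _ y0]) simp
qed
lemma lift_differentiable:
  fixes f :: "real \<Rightarrow> complex" and \<theta> :: "real \<Rightarrow> real"
  assumes c: "continuous_on UNIV \<theta>" and fl: "\<forall>s. f s = cis (\<theta> s)" and df: "f differentiable (at x)"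
  shows "\<theta> differentiable (at x)"
proof -
  define z0 where "z0 = cnj (f x)"
  define g where "g s = \<theta> x + Im (Ln (f s * z0))" for s
  have "isCont \<theta> x" using c continuous_on_eq_continuous_at by blast
  then obtain d where d: "d > 0" "\<forall>s. s \<noteq> x \<and> norm (s - x) < d \<longrightarrow> norm (\<theta> s - \<theta> x) < pi"
    unfolding isCont_def LIM_eq using pi_gt_zero by blast
  have eq: "g s = \<theta> s" if "dist s x < d" for s
  proof -
    have b: "\<bar>\<theta> s - \<theta> x\<bar> < pi" using d that pi_gt_zero by (cases "s = x") (auto simp: dist_norm)
    have "f s * z0 = cis (\<theta> s - \<theta> x)" unfolding z0_def using fl by (simp add: cis_cnj cis_mult)
    also have "\<dots> = exp (\<i> * of_real (\<theta> s - \<theta> x))" by (rule cis_conv_exp)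
    finally have "Ln (f s * z0) = \<i> * of_real (\<theta> s - \<theta> x)" using b by simp
    thus ?thesis unfolding g_def by simp
  qed
  obtain f' where f': "(f has_vector_derivative f') (at x)" using df vector_derivative_works by blast
  have h1: "((\<lambda>s. f s * z0) has_vector_derivative f' * z0) (at x)"
    using f' by (rule has_vector_derivative_mult_left)
  have one: "f x * z0 = 1" unfolding z0_def using fl by (simp add: cis_cnj cis_mult)
  have "(Ln has_field_derivative inverse 1) (at (f x * z0))"
    unfolding one by (rule has_field_derivative_Ln) auto
  from field_vector_diff_chain_at[OF h1 this]
  have "(Ln \<circ> (\<lambda>s. f s * z0)) differentiable (at x)"
    unfolding differentiable_def has_vector_derivative_def by blast
  hence "(\<lambda>s. Im ((Ln \<circ> (\<lambda>s. f s * z0)) s)) differentiable (at x)"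
    by (rule differentiable_compose[OF bounded_linear_imp_differentiable[OF bounded_linear_Im]])
  hence "g differentiable (at x)" unfolding g_def by (simp add: o_def)
  thus ?thesis using differentiable_transform_within[of g x UNIV d \<theta>] d eq by auto
qed

lemma final_limit:
  fixes G V :: "real \<Rightarrow> complex"
  assumes dG: "(G has_vector_derivative w) (at s0)" and G0: "G s0 = 0" and w: "w \<noteq> 0"
    and cV: "isCont V s0" and VG: "\<forall>s. G s \<noteq> 0 \<longrightarrow> V s = G s / of_real (norm (G s))"
  shows False
proof -
  define Q where "Q y = G y / of_real (y - s0)" for y
  have "((\<lambda>y. norm (G y - G s0 - (y - s0) *\<^sub>R w) / norm (y - s0)) \<longlongrightarrow> 0) (at s0)"
    using dG unfolding has_vector_derivative_def has_derivative_iff_norm by blast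
  moreover have "eventually (\<lambda>y. norm (G y - G s0 - (y - s0) *\<^sub>R w) / norm (y - s0) = norm (Q y - w)) (at s0)"
  proof -
    have "eventually (\<lambda>y. y \<noteq> s0) (at s0)" unfolding eventually_at_filter by simp
    then show ?thesis
    proof eventually_elim
      case (elim y)
      hence ne: "complex_of_real (y - s0) \<noteq> 0" by simp
      have "Q y - w = (G y - of_real (y - s0) * w) / of_real (y - s0)"
        unfolding Q_def using ne by (simp add: diff_divide_distrib)
      hence "norm (Q y - w) = norm (G y - of_real (y - s0) * w) / norm (y - s0)"
        by (simp add: norm_divide del: of_real_diff)
      thus ?case using G0 by (simp add: scaleR_conv_of_real del: of_real_diff)
    qed
  qed
  ultimately have "((\<lambda>y. norm (Q y - w)) \<longlongrightarrow> 0) (at s0)" using tendsto_cong by force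
  hence "((\<lambda>y. Q y - w) \<longlongrightarrow> 0) (at s0)" by (simp add: tendsto_norm_zero_iff)
  hence Qlim: "(Q \<longlongrightarrow> w) (at s0)" by (simp add: Lim_null[symmetric])
  have Qne: "eventually (\<lambda>y. Q y \<noteq> 0) (at s0)" using tendsto_imp_eventually_ne[OF Qlim w] .
  have nlim: "((\<lambda>y. Q y / of_real (norm (Q y))) \<longlongrightarrow> w / of_real (norm w)) (at s0)"
    using w by (intro tendsto_intros Qlim) auto
  have Vlim: "(V \<longlongrightarrow> V s0) (at s0)" using cV by (simp add: isCont_def)
  have "eventually (\<lambda>y. V y = Q y / of_real (norm (Q y))) (at_right s0)"
  proof -
    have "eventually (\<lambda>y. Q y \<noteq> 0) (at_right s0)" using Qne by (rule filter_leD[OF at_within_le_at])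
    moreover have "eventually (\<lambda>y. y > s0) (at_right s0)" by (simp add: eventually_at_right_less)
    ultimately show ?thesis
    proof eventually_elim
      case (elim y)
      have e: "G y = of_real (y - s0) * Q y" unfolding Q_def using elim by simp
      hence "G y \<noteq> 0" using elim by simp
      hence "V y = G y / of_real (norm (G y))" using VG by blast
      also have "\<dots> = Q y / of_real (norm (Q y))"
      proof -
        have n: "norm (G y) = (y - s0) * norm (Q y)" unfolding e using elim by (simp add: norm_mult del: of_real_diff)
        show ?thesis unfolding n unfolding e using elim by (simp del: of_real_diff)
      qed
      finally show ?case .
    qed
  qed
  moreover have "((\<lambda>y. Q y / of_real (norm (Q y))) \<longlongrightarrow> w / of_real (norm w)) (at_right s0)"
    using tendsto_mono[OF at_within_le_at[of s0 "{s0<..}"] nlim] .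
  ultimately have "(V \<longlongrightarrow> w / of_real (norm w)) (at_right s0)" using tendsto_cong by force
  moreover have "(V \<longlongrightarrow> V s0) (at_right s0)" using tendsto_mono[OF at_within_le_at Vlim] by blast
  ultimately have r: "V s0 = w / of_real (norm w)" using tendsto_unique trivial_limit_at_right_real by blast
  have "eventually (\<lambda>y. V y = - (Q y / of_real (norm (Q y)))) (at_left s0)"
  proof -
    have "eventually (\<lambda>y. Q y \<noteq> 0) (at_left s0)" using Qne by (rule filter_leD[OF at_within_le_at])
    moreover have "eventually (\<lambda>y. y < s0) (at_left s0)" unfolding eventually_at_filter by simp
    ultimately show ?thesis
    proof eventually_elim
      case (elim y)
      have e: "G y = of_real (y - s0) * Q y" unfolding Q_def using elim by simp
      hence "G y \<noteq> 0" using elim by simp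
      hence "V y = G y / of_real (norm (G y))" using VG by blast
      also have "\<dots> = - (Q y / of_real (norm (Q y)))"
      proof -
        have n: "norm (G y) = (s0 - y) * norm (Q y)" unfolding e using elim by (simp add: norm_mult del: of_real_diff)
        have m: "of_real (y - s0) = - (of_real (s0 - y) :: complex)" by simp
        show ?thesis unfolding n unfolding e m using elim by (simp del: of_real_diff)
      qed
      finally show ?case .
    qed
  qed
  moreover have "((\<lambda>y. - (Q y / of_real (norm (Q y)))) \<longlongrightarrow> - (w / of_real (norm w))) (at_left s0)"
    using tendsto_minus[OF tendsto_mono[OF at_within_le_at[of s0 "{..<s0}"] nlim]] .
  ultimately have "(V \<longlongrightarrow> - (w / of_real (norm w))) (at_left s0)" using tendsto_cong by force
  moreover have "(V \<longlongrightarrow> V s0) (at_left s0)" using tendsto_mono[OF at_within_le_at Vlim] by blast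
  ultimately have l: "V s0 = - (w / of_real (norm w))" using tendsto_unique trivial_limit_at_left_real by blast
  from r l have "w / of_real (norm w) = 0" by simp
  thus False using w by simp
qed

lemma cis_eq_int:
  assumes "cis a = cis b"
  shows "\<exists>n::int. a - b = 2 * pi * of_int n"
proof -
  have "exp (\<i> * complex_of_real a) = exp (\<i> * complex_of_real b)" using assms by (simp add: cis_conv_exp)
  then obtain n :: int where "\<i> * complex_of_real a = \<i> * complex_of_real b + (of_int (2 * n) * pi) * \<i>"
    unfolding exp_eq by blast
  hence "Im (\<i> * complex_of_real a) = Im (\<i> * complex_of_real b + (of_int (2 * n) * pi) * \<i>)" by simp
  hence "a = b + 2 * pi * of_int n" by simp
  thus ?thesis by auto
qed

lemma lift_diff_const:
  fixes \<theta> \<theta>1 :: "real \<Rightarrow> real"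
  assumes "continuous_on UNIV \<theta>" "continuous_on UNIV \<theta>1" "\<forall>s. cis (\<theta> s) = cis (\<theta>1 s)"
  shows "\<theta> x - \<theta>1 x = \<theta> y - \<theta>1 y"
proof -
  define g where "g s = \<theta> s - \<theta>1 s" for s
  have cg: "continuous_on UNIV g" unfolding g_def using assms(1,2) by (intro continuous_intros)
  have int: "\<exists>n::int. g s = 2 * pi * of_int n" for s unfolding g_def using cis_eq_int assms(3) by blast
  have "g constant_on UNIV"
  proof (rule continuous_discrete_range_constant[OF connected_UNIV cg])
    fix x :: real assume "x \<in> UNIV"
    show "\<exists>e>0. \<forall>y. y \<in> UNIV \<and> g y \<noteq> g x \<longrightarrow> e \<le> norm (g y - g x)"
    proof (intro exI[of _ "2 * pi"] conjI allI impI)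
      fix y assume "y \<in> UNIV \<and> g y \<noteq> g x"
      obtain n m :: int where nm: "g y = 2 * pi * of_int n" "g x = 2 * pi * of_int m" using int by blast
      hence "n \<noteq> m" using \<open>y \<in> UNIV \<and> g y \<noteq> g x\<close> by auto
      hence "1 \<le> \<bar>n - m\<bar>" by linarith
      hence "1 \<le> \<bar>of_int n - of_int m :: real\<bar>" by (metis of_int_1_le_iff of_int_abs of_int_diff)
      hence "2 * pi * 1 \<le> 2 * pi * \<bar>of_int n - of_int m :: real\<bar>" by (intro mult_left_mono) auto
      also have "\<dots> = norm (g y - g x)" unfolding nm by (simp add: abs_mult right_diff_distrib[symmetric])
      finally show "2 * pi \<le> norm (g y - g x)" by simp
    qed simp
  qed
  thus ?thesis unfolding g_def constant_on_def by auto
qed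

lemma degree_zero:
  assumes lift: "is_lift U \<theta>1" and per: "U L = U 0" and deg: "circle_degree L U = 0"
  shows "\<theta>1 L = \<theta>1 0"
proof -
  have "cis (\<theta>1 L) = cis (\<theta>1 0)" using lift per unfolding is_lift_def by metis
  then obtain n :: int where n: "\<theta>1 L - \<theta>1 0 = 2 * pi * of_int n" using cis_eq_int by blast
  have P: "\<forall>\<theta>. is_lift U \<theta> \<longrightarrow> \<theta> L - \<theta> 0 = 2 * pi * of_int n"
  proof (intro allI impI)
    fix \<theta> assume "is_lift U \<theta>"
    hence "\<theta> L - \<theta>1 L = \<theta> 0 - \<theta>1 0"
      using lift_diff_const[of \<theta> \<theta>1] lift unfolding is_lift_def by metis
    thus "\<theta> L - \<theta> 0 = 2 * pi * of_int n" using n by linarith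
  qed
  have "circle_degree L U = n"
    unfolding circle_degree_def
  proof (rule the_equality)
    show "\<forall>\<theta>. is_lift U \<theta> \<longrightarrow> \<theta> L - \<theta> 0 = 2 * pi * of_int n" by (rule P)
  next
    fix d :: int assume "\<forall>\<theta>. is_lift U \<theta> \<longrightarrow> \<theta> L - \<theta> 0 = 2 * pi * of_int d"
    hence "2 * pi * of_int d = 2 * pi * (of_int n :: real)" using lift n by metis
    thus "d = n" by simp
  qed
  thus ?thesis using deg n by simp
qed

lemma vd_shift:
  fixes g :: "real \<Rightarrow> 'a::real_normed_vector"
  assumes "(g has_vector_derivative D) (at (x + k))"
  shows "((\<lambda>s. g (s + k)) has_vector_derivative D) (at x)"
proof -
  have "((\<lambda>s. s + k) has_vector_derivative 1) (at x)" by (auto intro!: derivative_eq_intros)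
  from vector_diff_chain_at[OF this, of g D] assms show ?thesis by (simp add: o_def)
qed

lemma integral_deriv:
  fixes \<beta> :: "real \<Rightarrow> 'a::banach"
  assumes c\<beta>: "continuous_on UNIV \<beta>" and "c < x"
  shows "((\<lambda>y. integral {c..y} \<beta>) has_vector_derivative \<beta> x) (at x)"
proof -
  have "continuous_on {c..x+1} \<beta>" using c\<beta> continuous_on_subset by blast
  from integral_has_vector_derivative[OF this, of x] assms
  have "((\<lambda>y. integral {c..y} \<beta>) has_vector_derivative \<beta> x) (at x within {c..x+1})" by auto
  hence "((\<lambda>y. integral {c..y} \<beta>) has_vector_derivative \<beta> x) (at x within {c<..<x+1})"
    by (rule has_vector_derivative_within_subset) auto
  thus ?thesis using has_vector_derivative_within_open[of x "{c<..<x+1}"] assms by auto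
qed

lemma gamma_deriv:
  fixes \<alpha> \<beta> a :: "real \<Rightarrow> complex"
  assumes d\<alpha>: "\<forall>t. (\<alpha> has_vector_derivative a t) (at t)" and c\<beta>: "continuous_on UNIV \<beta>" and T: "T \<ge> 0"
  shows "(gamma_sol \<alpha> \<beta> T has_vector_derivative
           ((a (s + T) + a (s - T)) / 2 + (\<beta> (s + T) - \<beta> (s - T)) / 2)) (at s)"
proof -
  define c where "c = s - T - 1"
  define F where "F y = integral {c..y} \<beta>" for y
  define H where "H y = (\<alpha> (y + T) + \<alpha> (y + - T)) / 2 + (F (y + T) - F (y + - T)) / 2" for y
  have dF1: "(F has_vector_derivative \<beta> (s + T)) (at (s + T))"
    unfolding F_def using integral_deriv[OF c\<beta>] T by (simp add: c_def)
  have dF2: "(F has_vector_derivative \<beta> (s + - T)) (at (s + - T))"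
    unfolding F_def using integral_deriv[OF c\<beta>] T by (simp add: c_def)
  have dH: "(H has_vector_derivative ((a (s + T) + a (s + - T)) / 2 + (\<beta> (s + T) - \<beta> (s + - T)) / 2)) (at s)"
    unfolding H_def
    by (intro derivative_intros vd_shift dF1 dF2 d\<alpha>[rule_format])
  have eq: "H y = gamma_sol \<alpha> \<beta> T y" if "y \<in> ball s 1" for y
  proof -
    have y: "c \<le> y - T" "y - T \<le> y + T" using that T by (auto simp: c_def dist_real_def)
    have "integrable_on_c": "\<beta> integrable_on {c..y + T}"
      using c\<beta> continuous_on_subset integrable_continuous_real by blast
    have "integral {c..y - T} \<beta> + integral {y - T..y + T} \<beta> = integral {c..y + T} \<beta>"
      by (rule Henstock_Kurzweil_Integration.integral_combine[OF y integrable_on_c])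
    hence "integral {y - T..y + T} \<beta> = F (y + T) - F (y - T)" unfolding F_def by (simp add: algebra_simps)
    thus ?thesis unfolding H_def gamma_sol_def by simp
  qed
  have "s \<in> ball s 1" by simp
  from has_vector_derivative_transform_within_open[OF dH open_ball this eq]
  show ?thesis by simp
qed

lemma nonneg_int_zero:
  fixes f :: "real \<Rightarrow> real"
  assumes "continuous_on UNIV f" "L > 0" "\<forall>t\<in>{0..L}. f t \<ge> 0" "(f has_integral 0) {0..L}" "t \<in> {0..L}"
  shows "f t = 0"
proof (rule has_integral_0_cbox_imp_0[of 0 L f])
  show "continuous_on (cbox 0 L) f" using assms(1) continuous_on_subset by blast
  show "\<And>x. x \<in> box 0 L \<Longrightarrow> 0 \<le> f x" using assms(3) by auto
  show "(f has_integral 0) (cbox 0 L)" using assms(4) by simp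
  show "box 0 L \<noteq> {}" using assms(2) by simp
  show "t \<in> cbox 0 L" using assms(5) by simp
qed

lemma integral_deriv_zero:
  fixes \<alpha> a :: "real \<Rightarrow> complex"
  assumes "\<forall>t. (\<alpha> has_vector_derivative a t) (at t)" "\<alpha> L = \<alpha> 0" "L > 0"
  shows "(a has_integral 0) {0..L}"
proof -
  have "(a has_integral (\<alpha> L - \<alpha> 0)) {0..L}"
    by (rule fundamental_theorem_of_calculus) (use assms in \<open>auto intro: has_vector_derivative_at_within\<close>)
  thus ?thesis using assms(2) by simp
qed

lemma Re_integral:
  fixes f :: "real \<Rightarrow> complex"
  assumes "(f has_integral 0) S"
  shows "((\<lambda>t. Re (f t)) has_integral 0) S" "((\<lambda>t. Im (f t)) has_integral 0) S"
  using has_integral_linear[OF assms bounded_linear_Re] has_integral_linear[OF assms bounded_linear_Im]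
  by (simp_all add: o_def)

lemma pos_integral_contra:
  fixes G :: "real \<Rightarrow> real"
  assumes c: "continuous_on UNIV G" and L: "L > 0" and nz: "\<forall>t\<in>{0..L}. G t \<noteq> 0"
    and i: "(G has_integral 0) {0..L}" and pos: "G 0 > 0"
  shows False
proof -
  have "\<forall>t\<in>{0..L}. G t \<ge> 0"
  proof (rule ballI, rule ccontr)
    fix t assume t: "t \<in> {0..L}" "\<not> 0 \<le> G t"
    have "continuous_on {0..t} G" using c continuous_on_subset by blast
    from IVT2'[of G t 0 0, OF _ _ _ this] t pos obtain x where "0 \<le> x" "x \<le> t" "G x = 0" by force
    thus False using nz t by auto
  qed
  from nonneg_int_zero[OF c L this i, of 0] L pos show False by simp
qed

lemma halfplane_contra:
  fixes a :: "real \<Rightarrow> complex" and \<phi> \<psi> r :: "real \<Rightarrow> real"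
  assumes i: "(a has_integral 0) {0..L}" and L: "L > 0" and ca: "continuous_on UNIV a"
    and nz: "\<forall>t. a t \<noteq> 0"
    and rep: "\<forall>t. a t = of_real (r t) * cis ((\<phi> t + \<psi> t) / 2)" and rpos: "\<forall>t. r t > 0"
    and b: "\<forall>t. m1 \<le> \<phi> t \<and> \<phi> t \<le> M1 \<and> m2 \<le> \<psi> t \<and> \<psi> t \<le> M2"
    and h1: "M1 - m2 \<le> pi" and h2: "M2 - m1 \<le> pi"
  shows False
proof -
  define \<theta>0 where "\<theta>0 = (m1 + m2 + M1 + M2) / 4"
  define e where "e = cis (- \<theta>0)"
  define F where "F t = Re (a t * e)" for t
  define G where "G t = Im (a t * e)" for t
  have ae: "a t * e = of_real (r t) * cis ((\<phi> t + \<psi> t) / 2 - \<theta>0)" for t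
    unfolding e_def using rep by (simp add: cis_mult mult.assoc)
  have F: "F t = r t * cos ((\<phi> t + \<psi> t) / 2 - \<theta>0)" for t
    unfolding F_def ae by simp
  have Fnn: "F t \<ge> 0" for t
  proof -
    have "- (pi / 2) \<le> (\<phi> t + \<psi> t) / 2 - \<theta>0" "(\<phi> t + \<psi> t) / 2 - \<theta>0 \<le> pi / 2"
      using b[rule_format, of t] h1 h2 pi_gt_zero unfolding \<theta>0_def by (auto simp: field_simps)
    hence "cos ((\<phi> t + \<psi> t) / 2 - \<theta>0) \<ge> 0" by (rule cos_ge_zero)
    thus ?thesis unfolding F using rpos[rule_format, of t] by simp
  qed
  have ie: "((\<lambda>t. a t * e) has_integral 0) {0..L}" using has_integral_mult_left[OF i, of e] by simp
  have cF: "continuous_on UNIV F" unfolding F_def using ca by (intro continuous_intros)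
  have cG: "continuous_on UNIV G" unfolding G_def using ca by (intro continuous_intros)
  have F0: "F t = 0" if "t \<in> {0..L}" for t
    using nonneg_int_zero[OF cF L _ _ that] Fnn Re_integral(1)[OF ie] unfolding F_def by blast
  have Gnz: "\<forall>t\<in>{0..L}. G t \<noteq> 0"
  proof
    fix t assume t: "t \<in> {0..L}"
    have "a t * e \<noteq> 0" using nz unfolding e_def by simp
    thus "G t \<noteq> 0" using F0[OF t] unfolding F_def G_def by (simp add: complex_eq_iff)
  qed
  have iG: "(G has_integral 0) {0..L}" unfolding G_def using Re_integral(2)[OF ie] .
  show False
  proof (cases "G 0 > 0")
    case True
    then show ?thesis using pos_integral_contra[OF cG L Gnz iG] by blast
  next
    case False
    hence "G 0 < 0" using Gnz L by force
    have "continuous_on UNIV (\<lambda>t. - G t)" using cG by (intro continuous_intros)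
    moreover have "((\<lambda>t. - G t) has_integral 0) {0..L}" using has_integral_neg[OF iG] by simp
    ultimately show ?thesis using pos_integral_contra[of "\<lambda>t. - G t" L] L Gnz \<open>G 0 < 0\<close> by auto
  qed
qed

lemma unit_re_minus1:
  fixes z :: complex
  assumes "norm z = 1" "Re z = -1"
  shows "z = -1"
proof -
  have "(Re z)^2 + (Im z)^2 = 1" using assms(1) cmod_power2[of z] by simp
  hence "Im z = 0" using assms(2) by simp
  thus ?thesis using assms(2) by (simp add: complex_eq_iff)
qed

lemma const_contra:
  fixes q :: "real \<Rightarrow> complex"
  assumes cq: "continuous_on UNIV q" and nq: "\<forall>t. norm (q t) = 1" and np: "norm p0 = 1"
    and i: "((\<lambda>t. p0 + q t) has_integral 0) {0..L}" and L: "L > 0"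
  shows "\<exists>t. p0 + q t = 0"
proof -
  define F where "F t = Re ((p0 + q t) * cnj p0)" for t
  have pp: "p0 * cnj p0 = 1" using complex_norm_square[of p0] np by simp
  have F: "F t = 1 + Re (q t * cnj p0)" for t unfolding F_def using pp by (simp add: distrib_right)
  have Fnn: "F t \<ge> 0" for t
  proof -
    have "norm (q t * cnj p0) = 1" using nq np by (simp add: norm_mult)
    hence "\<bar>Re (q t * cnj p0)\<bar> \<le> 1" using abs_Re_le_cmod by metis
    thus ?thesis unfolding F by linarith
  qed
  have cF: "continuous_on UNIV F" unfolding F_def using cq by (intro continuous_intros)
  have "((\<lambda>t. (p0 + q t) * cnj p0) has_integral 0) {0..L}" using has_integral_mult_left[OF i, of "cnj p0"] by simp
  from Re_integral(1)[OF this] have iF: "(F has_integral 0) {0..L}" unfolding F_def .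
  have "F 0 = 0" using nonneg_int_zero[OF cF L _ iF, of 0] Fnn L by simp
  hence "Re (q 0 * cnj p0) = -1" unfolding F by simp
  moreover have "norm (q 0 * cnj p0) = 1" using nq np by (simp add: norm_mult)
  ultimately have "q 0 * cnj p0 = -1" using unit_re_minus1 by blast
  have "q 0 = q 0 * (cnj p0 * p0)" using pp by (simp add: mult.commute)
  also have "\<dots> = (q 0 * cnj p0) * p0" by (simp add: mult.assoc)
  also have "\<dots> = - p0" using \<open>q 0 * cnj p0 = -1\<close> by simp
  finally show ?thesis by (intro exI[of _ 0]) simp
qed

lemma unit_Ln:
  fixes z :: complex
  assumes "norm z = 1" "z \<noteq> -1"
  shows "cis (Im (Ln z)) = z" "- pi < Im (Ln z)" "Im (Ln z) < pi"
proof -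
  have z0: "z \<noteq> 0" using assms by auto
  have "Re (Ln z) = 0" using z0 assms by simp
  hence "Ln z = \<i> * of_real (Im (Ln z))" by (simp add: complex_eq_iff)
  hence "exp (\<i> * of_real (Im (Ln z))) = z" using exp_Ln[OF z0] by metis
  thus "cis (Im (Ln z)) = z" by (simp add: cis_conv_exp)
  show "- pi < Im (Ln z)" using mpi_less_Im_Ln[OF z0] .
  have "Im (Ln z) \<noteq> pi"
  proof
    assume "Im (Ln z) = pi"
    hence "Re z < 0" "Im z = 0" using Im_Ln_eq_pi[OF z0] by auto
    moreover have "(Re z)^2 + (Im z)^2 = 1" using assms(1) cmod_power2[of z] by simp
    ultimately have "Re z = 1 \<or> Re z = -1" by (simp add: power2_eq_1_iff)
    hence "Re z = -1" using \<open>Re z < 0\<close> by linarith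
    with \<open>Im z = 0\<close> have "z = -1" by (simp add: complex_eq_iff)
    thus False using assms by simp
  qed
  thus "Im (Ln z) < pi" using Im_Ln_le_pi[OF z0] by linarith
qed

lemma cis_vd:
  assumes "DERIV \<phi> x :> D"
  shows "((\<lambda>s. cis (\<phi> s)) has_vector_derivative (\<i> * of_real D * cis (\<phi> x))) (at x)"
proof -
  have h: "((\<lambda>s. \<i> * of_real (\<phi> s)) has_vector_derivative \<i> * of_real D) (at x)"
    by (intro has_vector_derivative_mult_right has_vector_derivative_of_real assms)
  have "(exp has_field_derivative exp (\<i> * of_real (\<phi> x))) (at (\<i> * of_real (\<phi> x)))"
    by (rule DERIV_exp)
  from field_vector_diff_chain_at[OF h this]
  show ?thesis by (simp add: o_def cis_conv_exp)
qed

lemma norm_add_sq: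
  fixes x y :: complex
  shows "(norm (x + y))^2 = (norm x)^2 + (norm y)^2 + 2 * inner x y"
    and "(norm (x - y))^2 = (norm x)^2 + (norm y)^2 - 2 * inner x y"
  by (simp_all add: power2_norm_eq_inner inner_add_left inner_add_right inner_diff_left inner_diff_right inner_commute)



theorem proposition2p11:
  fixes L :: real and \<alpha> \<beta> :: "real \<Rightarrow> complex"
  assumes "L > 0"
    and "smooth \<alpha>" and "smooth \<beta>"
    and "periodic L \<alpha>" and "periodic L \<beta>"
    and "\<forall>s. vderiv \<alpha> s \<noteq> 0"
    and "\<forall>s. inner (\<beta> s) (vderiv \<alpha> s) = 0"
    and "\<forall>s. (norm (vderiv \<alpha> s))\<^sup>2 + (norm (\<beta> s))\<^sup>2 = 1"
    and "rotation_index L \<alpha> = 0"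
  shows "\<exists>T>0. \<not> (\<exists>V. continuous_on UNIV V \<and> (\<forall>s. norm (V s) = 1) \<and>
            (\<forall>s. vderiv (gamma_sol \<alpha> \<beta> T) s \<noteq> 0 \<longrightarrow>
                 V s = vderiv (gamma_sol \<alpha> \<beta> T) s / of_real (norm (vderiv (gamma_sol \<alpha> \<beta> T) s))))"
proof -
  note L = assms(1)
  define a where "a = vderiv \<alpha>"
  have "(vderiv ^^ 0) \<alpha> differentiable (at t)" for t using assms(2) unfolding smooth_def by blast
  hence d\<alpha>: "\<forall>t. (\<alpha> has_vector_derivative a t) (at t)"
    unfolding a_def vderiv_def by (simp add: vector_derivative_works[symmetric])
  have "(vderiv ^^ 1) \<alpha> differentiable (at t)" for t using assms(2) unfolding smooth_def by blast
  hence da: "a differentiable (at t)" for t unfolding a_def by simp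
  have "(vderiv ^^ 0) \<beta> differentiable (at t)" for t using assms(3) unfolding smooth_def by blast
  hence d\<beta>: "\<beta> differentiable (at t)" for t by simp
  have ca: "continuous_on UNIV a"
    using da differentiable_imp_continuous_within continuous_at_imp_continuous_on by blast
  have c\<beta>: "continuous_on UNIV \<beta>"
    using d\<beta> differentiable_imp_continuous_within continuous_at_imp_continuous_on by blast
  have anz: "a t \<noteq> 0" for t using assms(6) a_def by simp
  have orth: "inner (a t) (\<beta> t) = 0" for t using assms(7) a_def by (simp add: inner_commute)
  have nsum: "(norm (a t))^2 + (norm (\<beta> t))^2 = 1" for t using assms(8) a_def by simp
  have per\<alpha>: "\<forall>s. \<alpha> (s + L) = \<alpha> s" using assms(4) unfolding periodic_def .
  have per\<beta>: "\<forall>s. \<beta> (s + L) = \<beta> s" using assms(5) unfolding periodic_def .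
  have pera: "a (t + L) = a t" for t
  proof -
    have "((\<lambda>s. \<alpha> (s + L)) has_vector_derivative a (t + L)) (at t)" using d\<alpha> vd_shift by blast
    moreover have "(\<lambda>s. \<alpha> (s + L)) = \<alpha>" using per\<alpha> by auto
    ultimately have "(\<alpha> has_vector_derivative a (t + L)) (at t)" by simp
    thus ?thesis using d\<alpha> vector_derivative_unique_at by blast
  qed
  define u where "u t = a t + \<beta> t" for t
  define v where "v t = a t - \<beta> t" for t
  have nu: "norm (u t) = 1" for t
  proof -
    have "(norm (u t))^2 = 1" unfolding u_def using norm_add_sq(1) nsum orth by simp
    thus ?thesis using norm_ge_zero[of "u t"] by (auto simp: power2_eq_1_iff)
  qed
  have nv: "norm (v t) = 1" for t
  proof -
    have "(norm (v t))^2 = 1" unfolding v_def using norm_add_sq(2) nsum orth by simp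
    thus ?thesis using norm_ge_zero[of "v t"] by (auto simp: power2_eq_1_iff)
  qed
  have uva: "u t + v t = 2 * a t" for t unfolding u_def v_def by simp
  have cu: "continuous_on UNIV u" unfolding u_def using ca c\<beta> by (intro continuous_intros)
  have cv: "continuous_on UNIV v" unfolding v_def using ca c\<beta> by (intro continuous_intros)
  have du: "u differentiable (at t)" for t unfolding u_def using da d\<beta> by (intro differentiable_add)
  have dv: "v differentiable (at t)" for t unfolding v_def using da d\<beta> by (intro differentiable_diff)
  have peru: "u (t + L) = u t" for t unfolding u_def using pera per\<beta> by simp
  have perv: "v (t + L) = v t" for t unfolding v_def using pera per\<beta> by simp
  obtain gu where cgu: "continuous_on UNIV gu" and egu: "\<And>x. u x = exp (gu x)"
    using continuous_logarithm_on_contractible[of UNIV u] cu nu contractible_UNIV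
    by (metis UNIV_I norm_zero zero_neq_one)
  define \<phi> where "\<phi> x = Im (gu x)" for x
  have u\<phi>: "u x = cis (\<phi> x)" for x
  proof -
    have "exp (Re (gu x)) = 1" using nu[of x] egu[of x] by simp
    hence "Re (gu x) = 0" by simp
    hence "gu x = \<i> * of_real (\<phi> x)" unfolding \<phi>_def by (simp add: complex_eq_iff)
    thus ?thesis using egu by (simp add: cis_conv_exp)
  qed
  have c\<phi>: "continuous_on UNIV \<phi>" unfolding \<phi>_def using cgu by (intro continuous_intros)
  define w where "w x = u x * cnj (v x)" for x
  have nw: "norm (w x) = 1" for x unfolding w_def using nu nv by (simp add: norm_mult)
  have vv: "cnj (v x) * v x = 1" for x using complex_norm_square[of "v x"] nv[of x] by (simp add: mult.commute)
  have uu: "u x * cnj (u x) = 1" for x using complex_norm_square[of "u x"] nu[of x] by simp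
  have wm1: "w x \<noteq> -1" for x
  proof
    assume "w x = -1"
    hence "w x * v x = - v x" by simp
    hence "u x = - v x" unfolding w_def using vv[of x] by (simp add: mult.assoc)
    hence "a x = 0" using uva[of x] by simp
    thus False using anz by simp
  qed
  define \<delta> where "\<delta> x = Im (Ln (w x))" for x
  have cis\<delta>: "cis (\<delta> x) = w x" and \<delta>b: "- pi < \<delta> x" "\<delta> x < pi" for x
    unfolding \<delta>_def using unit_Ln[OF nw wm1] by auto
  have cw: "isCont w x" for x
  proof -
    have "isCont u x" "isCont v x" using cu cv by (auto simp: continuous_on_eq_continuous_at)
    thus ?thesis unfolding w_def by (intro continuous_intros)
  qed
  have wnp: "w x \<notin> \<real>\<^sub>\<le>\<^sub>0" for x
  proof
    assume "w x \<in> \<real>\<^sub>\<le>\<^sub>0"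
    then obtain r where r: "w x = of_real r" "r \<le> 0" by (auto elim!: nonpos_Reals_cases)
    hence "\<bar>r\<bar> = 1" using nw[of x] by simp
    hence "w x = -1" using r by simp
    thus False using wm1 by simp
  qed
  have cLw: "isCont (\<lambda>x. Ln (w x)) x" for x
    by (rule isCont_o2[where f=w, OF cw continuous_at_Ln[OF wnp]])
  have c\<delta>: "continuous_on UNIV \<delta>"
  proof -
    have "isCont \<delta> x" for x unfolding \<delta>_def by (rule isCont_Im[OF cLw])
    thus ?thesis by (intro continuous_at_imp_continuous_on) auto
  qed
  define \<psi> where "\<psi> x = \<phi> x - \<delta> x" for x
  have v\<psi>: "v x = cis (\<psi> x)" for x
  proof -
    have "cis (\<psi> x) = cis (\<phi> x) * cnj (cis (\<delta> x))" unfolding \<psi>_def by (simp add: cis_cnj cis_mult)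
    also have "\<dots> = u x * cnj (u x) * v x" using u\<phi> cis\<delta> unfolding w_def by (simp add: mult.assoc)
    also have "\<dots> = v x" using uu by simp
    finally show ?thesis by simp
  qed
  have c\<psi>: "continuous_on UNIV \<psi>" unfolding \<psi>_def using c\<phi> c\<delta> by (intro continuous_intros)
  define \<phi>' where "\<phi>' = deriv \<phi>"
  define \<psi>' where "\<psi>' = deriv \<psi>"
  have d\<phi>: "DERIV \<phi> x :> \<phi>' x" for x
    unfolding \<phi>'_def DERIV_deriv_iff_real_differentiable
    using lift_differentiable[OF c\<phi> _ du] u\<phi> by blast
  have d\<psi>: "DERIV \<psi> x :> \<psi>' x" for x
    unfolding \<psi>'_def DERIV_deriv_iff_real_differentiable
    using lift_differentiable[OF c\<psi> _ dv] v\<psi> by blast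
  define r where "r x = cos (\<delta> x / 2)" for x
  have rpos: "r x > 0" for x unfolding r_def using \<delta>b[of x] by (intro cos_gt_zero_pi) auto
  have arep: "a t = of_real (r t) * cis ((\<phi> t + \<psi> t) / 2)" for t
  proof -
    have h: "cis (\<delta> t / 2) + cis (- (\<delta> t / 2)) = 2 * of_real (r t)"
      unfolding r_def by (simp add: complex_eq_iff)
    have "2 * a t = cis (\<phi> t) + cis (\<psi> t)" using uva u\<phi> v\<psi> by metis
    also have "\<dots> = cis ((\<phi> t + \<psi> t) / 2) * (cis (\<delta> t / 2) + cis (- (\<delta> t / 2)))"
    proof -
      have e: "(\<phi> t + \<psi> t) / 2 = \<phi> t - \<delta> t / 2" by (simp add: \<psi>_def field_simps)
      have e1: "\<phi> t - \<delta> t / 2 + \<delta> t / 2 = \<phi> t" by simp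
      have e2: "\<phi> t - \<delta> t / 2 + - (\<delta> t / 2) = \<psi> t" by (simp add: \<psi>_def)
      show ?thesis unfolding e distrib_left cis_mult e1 e2 ..
    qed
    also have "\<dots> = 2 * (of_real (r t) * cis ((\<phi> t + \<psi> t) / 2))" unfolding h by simp
    finally show ?thesis by simp
  qed
  have na: "norm (a t) = r t" for t using arep rpos[of t] by (simp add: norm_mult)
  define \<theta> where "\<theta> t = (\<phi> t + \<psi> t) / 2" for t
  have lift: "is_lift (\<lambda>s. vderiv \<alpha> s / of_real (norm (vderiv \<alpha> s))) \<theta>"
    unfolding is_lift_def
  proof
    show "continuous_on UNIV \<theta>" unfolding \<theta>_def using c\<phi> c\<psi> by (intro continuous_intros) auto
    show "\<forall>s. vderiv \<alpha> s / of_real (norm (vderiv \<alpha> s)) = cis (\<theta> s)"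
    proof
      fix s
      have "r s \<noteq> 0" using rpos[of s] by simp
      thus "vderiv \<alpha> s / of_real (norm (vderiv \<alpha> s)) = cis (\<theta> s)"
        using arep[of s] na[of s] unfolding a_def[symmetric] \<theta>_def by simp
    qed
  qed
  have "\<theta> L = \<theta> 0"
  proof (rule degree_zero[OF lift])
    show "vderiv \<alpha> L / of_real (norm (vderiv \<alpha> L)) = vderiv \<alpha> 0 / of_real (norm (vderiv \<alpha> 0))"
      using pera[of 0] unfolding a_def by simp
    show "circle_degree L (\<lambda>s. vderiv \<alpha> s / of_real (norm (vderiv \<alpha> s))) = 0"
      using assms(9) unfolding rotation_index_def .
  qed
  have "cis (\<phi> L) = cis (\<phi> 0)" using peru[of 0] u\<phi> by simp
  then obtain n :: int where n: "\<phi> L - \<phi> 0 = 2 * pi * of_int n" using cis_eq_int by blast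
  have "\<delta> L = \<delta> 0" unfolding \<delta>_def w_def using peru[of 0] perv[of 0] by simp
  hence \<phi>L: "\<phi> L = \<phi> 0" using \<open>\<theta> L = \<theta> 0\<close> unfolding \<theta>_def \<psi>_def by simp
  hence \<psi>L: "\<psi> L = \<psi> 0" using \<open>\<delta> L = \<delta> 0\<close> unfolding \<psi>_def by simp
  have per\<phi>: "\<forall>s. \<phi> (s + L) = \<phi> s"
  proof
    fix s
    have "continuous_on UNIV (\<lambda>s. \<phi> (s + L))"
      using c\<phi> by (intro continuous_on_compose2[OF c\<phi>] continuous_intros) auto
    from lift_diff_const[OF this c\<phi>, of s 0] peru u\<phi> \<phi>L show "\<phi> (s + L) = \<phi> s" by simp
  qed
  have per\<psi>: "\<forall>s. \<psi> (s + L) = \<psi> s"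
  proof
    fix s
    have "continuous_on UNIV (\<lambda>s. \<psi> (s + L))"
      using c\<psi> by (intro continuous_on_compose2[OF c\<psi>] continuous_intros) auto
    from lift_diff_const[OF this c\<psi>, of s 0] perv v\<psi> \<psi>L show "\<psi> (s + L) = \<psi> s" by simp
  qed
  have ia: "(a has_integral 0) {0..L}"
    using integral_deriv_zero[OF d\<alpha> _ L] per\<alpha>[rule_format, of 0] by simp
  have i2a: "((\<lambda>t. 2 * a t) has_integral 0) {0..L}" using has_integral_mult_right[OF ia, of 2] by simp
  have nc\<phi>: "\<exists>p1 p2. \<phi> p1 \<noteq> \<phi> p2"
  proof (rule ccontr)
    assume "\<not> ?thesis"
    hence uc: "u t = u 0" for t using u\<phi> by metis
    have "(\<lambda>t. u 0 + v t) = (\<lambda>t. 2 * a t)" using uva uc by (metis)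
    hence "((\<lambda>t. u 0 + v t) has_integral 0) {0..L}" using i2a by simp
    from const_contra[OF cv _ nu[of 0] this L] nv obtain t where "u 0 + v t = 0" by blast
    hence "2 * a t = 0" using uva uc by metis
    thus False using anz by simp
  qed
  have nc\<psi>: "\<exists>p1 p2. \<psi> p1 \<noteq> \<psi> p2"
  proof (rule ccontr)
    assume "\<not> ?thesis"
    hence vc: "v t = v 0" for t using v\<psi> by metis
    have "(\<lambda>t. v 0 + u t) = (\<lambda>t. 2 * a t)" using uva vc by (metis add.commute)
    hence "((\<lambda>t. v 0 + u t) has_integral 0) {0..L}" using i2a by simp
    from const_contra[OF cu _ nv[of 0] this L] nu obtain t where "v 0 + u t = 0" by blast
    hence "2 * a t = 0" using uva vc by (metis add.commute)
    thus False using anz by simp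
  qed
  obtain a1 where a1: "\<forall>x. \<phi> a1 \<le> \<phi> x" using periodic_min[OF c\<phi> per\<phi> L] by blast
  obtain b1 where b1: "\<forall>x. \<phi> x \<le> \<phi> b1" using periodic_max[OF c\<phi> per\<phi> L] by blast
  obtain a2 where a2: "\<forall>x. \<psi> a2 \<le> \<psi> x" using periodic_min[OF c\<psi> per\<psi> L] by blast
  obtain b2 where b2: "\<forall>x. \<psi> x \<le> \<psi> b2" using periodic_max[OF c\<psi> per\<psi> L] by blast
  have d0: "\<phi> 0 - \<psi> 0 = \<delta> 0" unfolding \<psi>_def by simp
  obtain cs x1 y1 x2 y2 where cs: "cs = pi \<or> cs = - pi"
    and xy1: "\<phi> x1 - \<psi> y1 < cs" and xy2: "\<phi> x2 - \<psi> y2 > cs"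
  proof (cases "\<phi> b1 - \<psi> a2 > pi")
    case True
    then show ?thesis using that[of pi 0 0 b1 a2] d0 \<delta>b[of 0] by auto
  next
    case F1: False
    show ?thesis
    proof (cases "\<phi> a1 - \<psi> b2 < - pi")
      case True
      then show ?thesis using that[of "- pi" a1 b2 0 0] d0 \<delta>b[of 0] by auto
    next
      case False
      have "False"
      proof (rule halfplane_contra[OF ia L ca])
        show "\<forall>t. a t \<noteq> 0" using anz by blast
        show "\<forall>t. a t = of_real (r t) * cis ((\<phi> t + \<psi> t) / 2)" using arep by blast
        show "\<forall>t. r t > 0" using rpos by blast
        show "\<forall>t. \<phi> a1 \<le> \<phi> t \<and> \<phi> t \<le> \<phi> b1 \<and> \<psi> a2 \<le> \<psi> t \<and> \<psi> t \<le> \<psi> b2"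
          using a1 b1 a2 b2 by blast
        show "\<phi> b1 - \<psi> a2 \<le> pi" using F1 by simp
        show "\<psi> b2 - \<phi> a1 \<le> pi" using False by simp
      qed
      then show ?thesis by blast
    qed
  qed
  obtain p1 p2 where np: "\<phi> p1 \<noteq> \<phi> p2" using nc\<phi> by blast
  obtain q1 q2 where nq: "\<psi> q1 \<noteq> \<psi> q2" using nc\<psi> by blast
  obtain x y where xy: "y < x" "\<phi> x - \<psi> y = cs" "\<phi>' x \<noteq> \<psi>' y"
    using core[OF d\<phi> d\<psi> per\<phi> per\<psi> L xy1 xy2 np nq] by blast
  have uxvy: "u x = - v y"
  proof -
    have "u x = cis (\<psi> y + cs)" using u\<phi> xy(2) by (metis add_diff_cancel_left' diff_add_cancel add.commute)
    also have "\<dots> = cis (\<psi> y) * cis cs" by (simp add: cis_mult)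
    also have "cis cs = -1" using cs by (auto simp: complex_eq_iff)
    finally show ?thesis using v\<psi> by simp
  qed
  define T where "T = (x - y) / 2"
  define s0 where "s0 = (x + y) / 2"
  have T: "T > 0" unfolding T_def using xy by simp
  have s0T: "s0 + T = x" "s0 + - T = y" unfolding T_def s0_def by (simp_all add: field_simps)
  define G where "G s = (u (s + T) + v (s + - T)) / 2" for s
  have vG: "vderiv (gamma_sol \<alpha> \<beta> T) s = G s" for s
  proof -
    have "(gamma_sol \<alpha> \<beta> T has_vector_derivative
           ((a (s + T) + a (s - T)) / 2 + (\<beta> (s + T) - \<beta> (s - T)) / 2)) (at s)"
      using gamma_deriv[OF d\<alpha> c\<beta>] T by simp
    hence "vderiv (gamma_sol \<alpha> \<beta> T) s = (a (s + T) + a (s - T)) / 2 + (\<beta> (s + T) - \<beta> (s - T)) / 2"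
      unfolding vderiv_def by (rule vector_derivative_at)
    also have "\<dots> = G s" unfolding G_def u_def v_def by (simp add: field_simps)
    finally show ?thesis .
  qed
  have du': "(u has_vector_derivative (\<i> * of_real (\<phi>' x) * u x)) (at x)"
  proof -
    have "u = (\<lambda>s. cis (\<phi> s))" using u\<phi> by auto
    thus ?thesis using cis_vd[OF d\<phi>[of x]] u\<phi>[of x] by simp
  qed
  have dv': "(v has_vector_derivative (\<i> * of_real (\<psi>' y) * v y)) (at y)"
  proof -
    have "v = (\<lambda>s. cis (\<psi> s))" using v\<psi> by auto
    thus ?thesis using cis_vd[OF d\<psi>[of y]] v\<psi>[of y] by simp
  qed
  define wd where "wd = (\<i> * of_real (\<phi>' x) * u x + \<i> * of_real (\<psi>' y) * v y) / 2"
  have dG: "(G has_vector_derivative wd) (at s0)"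
  proof -
    have "((\<lambda>s. u (s + T)) has_vector_derivative (\<i> * of_real (\<phi>' x) * u x)) (at s0)"
      using vd_shift[of u _ s0 T] du' s0T by simp
    moreover have "((\<lambda>s. v (s + - T)) has_vector_derivative (\<i> * of_real (\<psi>' y) * v y)) (at s0)"
      using vd_shift[of v _ s0 "- T"] dv' s0T by simp
    ultimately show ?thesis unfolding G_def wd_def by (intro derivative_intros)
  qed
  have G0: "G s0 = 0" unfolding G_def s0T using uxvy by simp
  have wd0: "wd \<noteq> 0"
  proof
    assume "wd = 0"
    hence "\<i> * u x * (of_real (\<phi>' x) - of_real (\<psi>' y)) = 0" unfolding wd_def uxvy
      by (simp add: algebra_simps)
    moreover have "u x \<noteq> 0" using nu[of x] by auto
    ultimately have "(of_real (\<phi>' x) :: complex) = of_real (\<psi>' y)" by simp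
    thus False using xy(3) by simp
  qed
  show ?thesis
  proof (intro exI[of _ T] conjI T notI)
    assume "\<exists>V. continuous_on UNIV V \<and> (\<forall>s. norm (V s) = 1) \<and>
            (\<forall>s. vderiv (gamma_sol \<alpha> \<beta> T) s \<noteq> 0 \<longrightarrow>
                 V s = vderiv (gamma_sol \<alpha> \<beta> T) s / of_real (norm (vderiv (gamma_sol \<alpha> \<beta> T) s)))"
    then obtain V where cV: "continuous_on UNIV V"
      and VG: "\<forall>s. G s \<noteq> 0 \<longrightarrow> V s = G s / of_real (norm (G s))" using vG by auto
    have "isCont V s0" using cV by (simp add: continuous_on_eq_continuous_at)
    from final_limit[OF dG G0 wd0 this VG] show False .
  qed
qed

end
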